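(* Let $G=(V,E)$ be a connected undirected graph and $\bm q$ a probability distribution on $V$. Then $G$ is an $\alpha$-insensitive equilibrium in the add-delete-model (with jump distribution $\bm q$) if and only if $G$ is a complete graph.
   Context: PageRank. For $\alpha\in(0,1)$ and distribution $\bm q$, for a directed graph $D$ let $\Gamma(u)$ be the out-neighbour set; the potential $\phi_{uv}$ is the probability that an $\alpha$-random walk (with probability $\alpha$ jump to a vertex drawn from $\bm q$, otherwise move to a uniformly random out-neighbour; a vertex with no out-neighbours forces a jump) started at $u$ visits $v$ before its first jump; for $\Gamma(v)\ne\emptyset$ the PageRank is $\pi_v=\alpha\,\frac{\sum_{u}q_u\phi_{uv}}{1-\frac{1-\alpha}{|\Gamma(v)|}\sum_{i\in\Gamma(v)}\phi_{iv}}$ (the stationary probability of $v$ when no out-degree is $0$). Undirected graphs are identified with bidirected graphs; $\pi^H_w$ is the PageRank of $w$ in $H$. Add-delete-model. A strategy of a vertex $v$ of $G$ is a subset $E_v\subseteq\Gamma(v)$ of neighbours to keep together with at most one non-neighbour $u\ne v$; the resulting graph $G'$ is obtained by deleting edges $vw$, $w\in\Gamma(v)\setminus E_v$, and adding $uv$ if $u$ is chosen ($v$ must keep at least one neighbour in $G'$). It is admissible if no edge is added, or the edge $uv$ is added and $\pi^{G'}_u>\pi^G_u$. $v$ is in best response if no admissible strategy gives $\pi^{G'}_v>\pi^G_v$; $G$ is a Nash equilibrium (for given $\alpha,\bm q$) if every vertex is in best response. $G$ is an $\alpha$-insensitive equilibrium if it is a Nash equilibrium in the add-delete-model for every $\alpha\in(0,1)$.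 *)

theory Defs
  imports Complex_Main
begin

text \<open>Directed graphs on a finite vertex type are sets of arcs; an undirected graph
is identified with the bidirected graph (a symmetric arc set).\<close>

definition out_nbrs :: "('a \<times> 'a) set \<Rightarrow> 'a \<Rightarrow> 'a set" where
  "out_nbrs D u = {w. (u, w) \<in> D}"

text \<open>hit_prob alpha D v n u: probability that the alpha-random walk started at u
visits v within the first n steps and before its first jump (a vertex without
out-neighbours forces a jump).\<close>

primrec hit_prob :: "real \<Rightarrow> ('a \<times> 'a) set \<Rightarrow> 'a \<Rightarrow> nat \<Rightarrow> 'a \<Rightarrow> real" where
  "hit_prob alpha D v 0 u = (if u = v then 1 else 0)"
| "hit_prob alpha D v (Suc n) u =
     (if u = v then 1
      else if out_nbrs D u = {} then 0
      else (1 - alpha) / real (card (out_nbrs D u)) * (\<Sum>i\<in>out_nbrs D u. hit_prob alpha D v n i))"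

text \<open>The potential phi_uv: probability that the walk from u visits v before its
first jump (limit of the non-decreasing sequence above).\<close>

definition potential :: "real \<Rightarrow> ('a \<times> 'a) set \<Rightarrow> 'a \<Rightarrow> 'a \<Rightarrow> real" where
  "potential alpha D u v = lim (\<lambda>n. hit_prob alpha D v n u)"

definition pagerank :: "real \<Rightarrow> ('a::finite \<Rightarrow> real) \<Rightarrow> ('a \<times> 'a) set \<Rightarrow> 'a \<Rightarrow> real" where
  "pagerank alpha q D v =
     alpha * (\<Sum>u\<in>UNIV. q u * potential alpha D u v) /
     (1 - (1 - alpha) / real (card (out_nbrs D v)) * (\<Sum>i\<in>out_nbrs D v. potential alpha D i v))"

definition deviate :: "('a \<times> 'a) set \<Rightarrow> 'a \<Rightarrow> 'a set \<Rightarrow> 'a option \<Rightarrow> ('a \<times> 'a) set" where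
  "deviate E v Ev uo =
     (E - {(v, w) | w. w \<in> out_nbrs E v - Ev} - {(w, v) | w. w \<in> out_nbrs E v - Ev})
     \<union> (case uo of None \<Rightarrow> {} | Some u \<Rightarrow> {(u, v), (v, u)})"

definition is_strategy :: "('a \<times> 'a) set \<Rightarrow> 'a \<Rightarrow> 'a set \<Rightarrow> 'a option \<Rightarrow> bool" where
  "is_strategy E v Ev uo \<longleftrightarrow>
     Ev \<subseteq> out_nbrs E v \<and>
     (case uo of None \<Rightarrow> True | Some u \<Rightarrow> u \<noteq> v \<and> u \<notin> out_nbrs E v) \<and>
     out_nbrs (deviate E v Ev uo) v \<noteq> {}"

definition admissible :: "real \<Rightarrow> ('a::finite \<Rightarrow> real) \<Rightarrow> ('a \<times> 'a) set \<Rightarrow> 'a \<Rightarrow> 'a set \<Rightarrow> 'a option \<Rightarrow> bool" where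
  "admissible alpha q E v Ev uo \<longleftrightarrow>
     (case uo of None \<Rightarrow> True
      | Some u \<Rightarrow> pagerank alpha q (deviate E v Ev uo) u > pagerank alpha q E u)"

definition best_response :: "real \<Rightarrow> ('a::finite \<Rightarrow> real) \<Rightarrow> ('a \<times> 'a) set \<Rightarrow> 'a \<Rightarrow> bool" where
  "best_response alpha q E v \<longleftrightarrow>
     (\<forall>Ev uo. is_strategy E v Ev uo \<and> admissible alpha q E v Ev uo \<longrightarrow>
        \<not> pagerank alpha q (deviate E v Ev uo) v > pagerank alpha q E v)"

definition nash_equilibrium :: "real \<Rightarrow> ('a::finite \<Rightarrow> real) \<Rightarrow> ('a \<times> 'a) set \<Rightarrow> bool" where
  "nash_equilibrium alpha q E \<longleftrightarrow> (\<forall>v. best_response alpha q E v)"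

definition alpha_insensitive_equilibrium :: "('a::finite \<Rightarrow> real) \<Rightarrow> ('a \<times> 'a) set \<Rightarrow> bool" where
  "alpha_insensitive_equilibrium q E \<longleftrightarrow>
     (\<forall>alpha. 0 < alpha \<and> alpha < 1 \<longrightarrow> nash_equilibrium alpha q E)"

definition undirected_graph :: "('a \<times> 'a) set \<Rightarrow> bool" where
  "undirected_graph E \<longleftrightarrow> sym E \<and> irrefl E"

definition connected_graph :: "('a \<times> 'a) set \<Rightarrow> bool" where
  "connected_graph E \<longleftrightarrow> (\<forall>u v. (u, v) \<in> E\<^sup>*)"

definition complete_graph :: "('a \<times> 'a) set \<Rightarrow> bool" where
  "complete_graph E \<longleftrightarrow> (\<forall>u v. u \<noteq> v \<longrightarrow> (u, v) \<in> E)"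

end

theory Submission
  imports Defs
begin


lemma dmc: "c \<noteq> 0 \<Longrightarrow> x / c * c = (x::real)" by simp
lemma dmc2: "c \<noteq> 0 \<Longrightarrow> x / c * (c * y) = (x::real) * y" by simp

lemma hp_bounds:
  fixes D :: "('a::finite \<times> 'a) set"
  assumes "0 \<le> a" "a \<le> 1"
  shows "0 \<le> hit_prob a D v n u \<and> hit_prob a D v n u \<le> (1::real)"
proof (induction n arbitrary: u)
  case 0 then show ?case by simp
next
  case (Suc n)
  show ?case
  proof (cases "u = v \<or> out_nbrs D u = {}")
    case True then show ?thesis by auto
  next
    case False
    let ?S = "out_nbrs D u"
    have fin: "finite ?S" by simp
    have cpos: "card ?S > 0" using False fin by (simp add: card_gt_0_iff)
    have s0: "0 \<le> (\<Sum>i\<in>?S. hit_prob a D v n i)" using Suc by (simp add: sum_nonneg)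
    have s1: "(\<Sum>i\<in>?S. hit_prob a D v n i) \<le> real (card ?S)"
      using sum_bounded_above[of ?S "\<lambda>i. hit_prob a D v n i" 1] Suc by simp
    have "(1 - a) / real (card ?S) * (\<Sum>i\<in>?S. hit_prob a D v n i) \<le> (1 - a) / real (card ?S) * real (card ?S)"
      using s1 assms by (intro mult_left_mono) auto
    also have "\<dots> = 1 - a" using False by (intro dmc) simp
    finally have "(1 - a) / real (card ?S) * (\<Sum>i\<in>?S. hit_prob a D v n i) \<le> 1" using assms by linarith
    moreover have "0 \<le> (1 - a) / real (card ?S) * (\<Sum>i\<in>?S. hit_prob a D v n i)"
      using s0 assms by simp
    ultimately show ?thesis using False by simp
  qed
qed

lemma hp_nonneg: fixes D :: "('a::finite \<times> 'a) set" shows "0 \<le> a \<Longrightarrow> a \<le> 1 \<Longrightarrow> 0 \<le> hit_prob a D v n u"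
  using hp_bounds by blast

lemma hp_mono:
  fixes D :: "('a::finite \<times> 'a) set"
  assumes "0 \<le> a" "a \<le> 1"
  shows "hit_prob a D v n u \<le> hit_prob a D v (Suc n) u"
proof (induction n arbitrary: u)
  case 0
  have "0 \<le> hit_prob a D v (Suc 0) u" using hp_bounds[OF assms, of D v "Suc 0" u] by linarith
  then show ?case by (cases "u = v") auto
next
  case (Suc n)
  show ?case
  proof (cases "u = v \<or> out_nbrs D u = {}")
    case True then show ?thesis by auto
  next
    case False
    have "(\<Sum>i\<in>out_nbrs D u. hit_prob a D v n i) \<le> (\<Sum>i\<in>out_nbrs D u. hit_prob a D v (Suc n) i)"
      using Suc by (intro sum_mono) auto
    then have "(1 - a) / real (card (out_nbrs D u)) * (\<Sum>i\<in>out_nbrs D u. hit_prob a D v n i)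
      \<le> (1 - a) / real (card (out_nbrs D u)) * (\<Sum>i\<in>out_nbrs D u. hit_prob a D v (Suc n) i)"
      using assms by (intro mult_left_mono) auto
    then show ?thesis using False by (simp only: hit_prob.simps) simp
  qed
qed

lemma pot_tendsto:
  fixes D :: "('a::finite \<times> 'a) set"
  assumes "0 \<le> a" "a \<le> 1"
  shows "(\<lambda>n. hit_prob a D v n u) \<longlonglongrightarrow> potential a D u v"
proof -
  have inc: "incseq (\<lambda>n. hit_prob a D v n u)"
    unfolding incseq_Suc_iff using hp_mono[OF assms] by blast
  have bdd: "bdd_above (range (\<lambda>n. hit_prob a D v n u))"
    using hp_bounds[OF assms] by (intro bdd_aboveI[of _ 1]) auto
  have "convergent (\<lambda>n. hit_prob a D v n u)"
    using LIMSEQ_incseq_SUP[OF bdd inc] by (auto simp: convergent_def)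
  then show ?thesis unfolding potential_def by (simp add: convergent_LIMSEQ_iff)
qed

lemma pot_bounds:
  fixes D :: "('a::finite \<times> 'a) set"
  assumes "0 \<le> a" "a \<le> 1"
  shows "0 \<le> potential a D u v \<and> potential a D u v \<le> 1"
  using pot_tendsto[OF assms, of D v u] hp_bounds[OF assms]
  by (meson LIMSEQ_le_const LIMSEQ_le_const2)

lemma pot_eq:
  fixes D :: "('a::finite \<times> 'a) set"
  assumes "0 \<le> a" "a \<le> 1"
  shows "potential a D u v = (if u = v then 1 else if out_nbrs D u = {} then 0
     else (1 - a) / real (card (out_nbrs D u)) * (\<Sum>i\<in>out_nbrs D u. potential a D i v))"
proof -
  have l1: "(\<lambda>n. hit_prob a D v (Suc n) u) \<longlonglongrightarrow> potential a D u v"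
    using pot_tendsto[OF assms] LIMSEQ_Suc by blast
  have l2: "(\<lambda>n. hit_prob a D v (Suc n) u) \<longlonglongrightarrow> (if u = v then 1 else if out_nbrs D u = {} then 0
     else (1 - a) / real (card (out_nbrs D u)) * (\<Sum>i\<in>out_nbrs D u. potential a D i v))"
    unfolding hit_prob.simps
    by (cases "u = v"; cases "out_nbrs D u = {}") (auto intro!: tendsto_intros pot_tendsto[OF assms])
  show ?thesis using LIMSEQ_unique[OF l1 l2] .
qed

lemma pot_unique:
  fixes D :: "('a::finite \<times> 'a) set"
  assumes "0 \<le> a" "a \<le> 1" "0 < a"
    and fv: "f v = 1" and fb: "\<And>u. 0 \<le> f u \<and> f u \<le> 1"
    and feq: "\<And>u. u \<noteq> v \<Longrightarrow> f u = (if out_nbrs D u = {} then 0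
         else (1 - a) / real (card (out_nbrs D u)) * (\<Sum>i\<in>out_nbrs D u. f i))"
  shows "potential a D u v = f u"
proof -
  have bd: "\<bar>hit_prob a D v n w - f w\<bar> \<le> (1 - a) ^ n" for n w
  proof (induction n arbitrary: w)
    case 0 then show ?case using fv fb[of w] by auto
  next
    case (Suc n)
    show ?case
    proof (cases "w = v \<or> out_nbrs D w = {}")
      case True
      have "0 \<le> (1 - a) ^ Suc n" using assms by simp
      then show ?thesis using True fv feq[of w] by auto
    next
      case False
      let ?S = "out_nbrs D w"
      have fin: "finite ?S" by simp
      have cpos: "card ?S > 0" using False fin by (simp add: card_gt_0_iff)
      have "hit_prob a D v (Suc n) w - f w = (1 - a) / real (card ?S) * (\<Sum>i\<in>?S. hit_prob a D v n i - f i)"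
        using False feq[of w] by (simp add: sum_subtractf right_diff_distrib)
      then have "\<bar>hit_prob a D v (Suc n) w - f w\<bar> = (1 - a) / real (card ?S) * \<bar>\<Sum>i\<in>?S. hit_prob a D v n i - f i\<bar>"
        using assms by (simp add: abs_mult)
      also have "\<dots> \<le> (1 - a) / real (card ?S) * (\<Sum>i\<in>?S. \<bar>hit_prob a D v n i - f i\<bar>)"
        using assms by (intro mult_left_mono sum_abs) auto
      also have "\<dots> \<le> (1 - a) / real (card ?S) * (real (card ?S) * (1 - a) ^ n)"
        using assms Suc sum_bounded_above[of ?S "\<lambda>i. \<bar>hit_prob a D v n i - f i\<bar>" "(1-a)^n"]
        by (intro mult_left_mono) auto
      also have "\<dots> = (1 - a) ^ Suc n" using False dmc2[of "real (card ?S)" "1-a" "(1-a)^n"] by simp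
      finally show ?thesis .
    qed
  qed
  have z: "(\<lambda>n. (1 - a) ^ n) \<longlonglongrightarrow> 0" using assms by (intro LIMSEQ_power_zero) auto
  have "(\<lambda>n. hit_prob a D v n u - f u) \<longlonglongrightarrow> 0"
  proof (rule tendsto_0_le[OF z, where K=1])
    have "norm (hit_prob a D v n u - f u) \<le> norm ((1 - a) ^ n) * 1" for n
      using bd[of n u] assms by (simp add: abs_of_nonneg)
    then show "\<forall>\<^sub>F n in sequentially. norm (hit_prob a D v n u - f u) \<le> norm ((1 - a) ^ n) * 1"
      by (intro always_eventually allI)
  qed
  then have "(\<lambda>n. hit_prob a D v n u) \<longlonglongrightarrow> f u"
    by (rule LIM_zero_cancel)
  then show ?thesis by (rule LIMSEQ_unique[OF pot_tendsto[OF assms(1,2)]])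
qed

lemma pot_anti:
  fixes D :: "('a::finite \<times> 'a) set"
  assumes "0 \<le> a1" "a1 \<le> a2" "a2 \<le> 1"
  shows "potential a2 D u v \<le> potential a1 D u v"
proof -
  have "hit_prob a2 D v n w \<le> hit_prob a1 D v n w" for n w
  proof (induction n arbitrary: w)
    case 0 then show ?case by simp
  next
    case (Suc n)
    show ?case
    proof (cases "w = v \<or> out_nbrs D w = {}")
      case True then show ?thesis by auto
    next
      case False
      let ?S = "out_nbrs D w"
      have s0: "0 \<le> (\<Sum>i\<in>?S. hit_prob a2 D v n i)"
        using hp_nonneg[of a2 D v n] assms by (intro sum_nonneg) auto
      have s1: "(\<Sum>i\<in>?S. hit_prob a2 D v n i) \<le> (\<Sum>i\<in>?S. hit_prob a1 D v n i)"
        using Suc by (intro sum_mono) auto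
      have "(1 - a2) / real (card ?S) * (\<Sum>i\<in>?S. hit_prob a2 D v n i)
         \<le> (1 - a1) / real (card ?S) * (\<Sum>i\<in>?S. hit_prob a1 D v n i)"
        using s0 s1 assms by (intro mult_mono divide_right_mono) auto
      then show ?thesis using False by simp
    qed
  qed
  then show ?thesis
    using pot_tendsto[of a1 D v u] pot_tendsto[of a2 D v u] assms
    by (intro LIMSEQ_le) auto
qed



lemma out_fin: fixes D :: "('a::finite \<times> 'a) set" shows "finite (out_nbrs D w)" by simp

lemma sum_out_eq: fixes D :: "('a::finite \<times> 'a) set"
  shows "(\<Sum>i\<in>out_nbrs D w. f i) = (\<Sum>i\<in>UNIV. if (w, i) \<in> D then f i else (0::real))"
  unfolding out_nbrs_def using sum.inter_filter[of "UNIV::'a set" f "\<lambda>i. (w,i) \<in> D"] by simp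

lemma double_sum_swap:
  fixes D :: "('a::finite \<times> 'a) set"
  assumes "sym D"
  shows "(\<Sum>w\<in>UNIV. \<Sum>i\<in>out_nbrs D w. f i) = (\<Sum>i\<in>UNIV. real (card (out_nbrs D i)) * f i)"
proof -
  have "(\<Sum>w\<in>UNIV. \<Sum>i\<in>out_nbrs D w. f i) = (\<Sum>w\<in>UNIV. \<Sum>i\<in>UNIV. if (w, i) \<in> D then f i else 0)"
    by (simp add: sum_out_eq)
  also have "\<dots> = (\<Sum>i\<in>UNIV. \<Sum>w\<in>UNIV. if (w, i) \<in> D then f i else 0)"
    by (rule sum.swap)
  also have "\<dots> = (\<Sum>i\<in>UNIV. \<Sum>w\<in>UNIV. if (i, w) \<in> D then f i else 0)"
    using assms by (intro sum.cong refl) (auto dest: symD)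
  also have "\<dots> = (\<Sum>i\<in>UNIV. real (card (out_nbrs D i)) * f i)"
  proof (rule sum.cong[OF refl])
    fix i
    have "(\<Sum>w\<in>UNIV. if (i, w) \<in> D then f i else 0) = (\<Sum>w\<in>out_nbrs D i. f i)"
      by (rule sum_out_eq[symmetric])
    then show "(\<Sum>w\<in>UNIV. if (i, w) \<in> D then f i else 0) = real (card (out_nbrs D i)) * f i"
      by simp
  qed
  finally show ?thesis .
qed

lemma kac:
  fixes D :: "('a::finite \<times> 'a) set"
  assumes "sym D" "0 < a" "a < 1" and ne: "\<And>w. out_nbrs D w \<noteq> {}"
  shows "real (card (out_nbrs D v)) - (1 - a) * (\<Sum>i\<in>out_nbrs D v. potential a D i v)
       = a * (\<Sum>i\<in>UNIV. real (card (out_nbrs D i)) * potential a D i v)"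
proof -
  define \<phi> where "\<phi> i = potential a D i v" for i
  define d where "d i = real (card (out_nbrs D i))" for i
  have dpos: "d w > 0" for w using ne[of w] unfolding d_def by (simp add: card_gt_0_iff)
  have pv: "\<phi> v = 1" unfolding \<phi>_def using pot_eq[of a D v v] assms by simp
  have eqw: "(1 - a) * (\<Sum>i\<in>out_nbrs D w. \<phi> i) = d w * \<phi> w
     + (if w = v then (1 - a) * (\<Sum>i\<in>out_nbrs D v. \<phi> i) - d v else 0)" for w
  proof (cases "w = v")
    case True then show ?thesis using pv by simp
  next
    case False
    have "\<phi> w = (1 - a) / d w * (\<Sum>i\<in>out_nbrs D w. \<phi> i)"
      unfolding \<phi>_def d_def using pot_eq[of a D w v] assms False ne[of w] by simp
    then show ?thesis using False dpos[of w] by (simp add: field_simps)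
  qed
  have "(1 - a) * (\<Sum>i\<in>UNIV. d i * \<phi> i) = (\<Sum>w\<in>UNIV. (1 - a) * (\<Sum>i\<in>out_nbrs D w. \<phi> i))"
  proof -
    have "(\<Sum>i\<in>UNIV. d i * \<phi> i) = (\<Sum>w\<in>UNIV. \<Sum>i\<in>out_nbrs D w. \<phi> i)"
      using double_sum_swap[OF assms(1), of \<phi>] unfolding d_def by simp
    then have "(1 - a) * (\<Sum>i\<in>UNIV. d i * \<phi> i) = (1 - a) * (\<Sum>w\<in>UNIV. \<Sum>i\<in>out_nbrs D w. \<phi> i)"
      by simp
    also have "\<dots> = (\<Sum>w\<in>UNIV. (1 - a) * (\<Sum>i\<in>out_nbrs D w. \<phi> i))"
      by (rule sum_distrib_left)
    finally show ?thesis .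
  qed
  also have "\<dots> = (\<Sum>w\<in>UNIV. d w * \<phi> w) + ((1 - a) * (\<Sum>i\<in>out_nbrs D v. \<phi> i) - d v)"
  proof -
    have "(\<Sum>w\<in>UNIV. (1 - a) * (\<Sum>i\<in>out_nbrs D w. \<phi> i)) = (\<Sum>w\<in>UNIV. d w * \<phi> w
     + (if w = v then (1 - a) * (\<Sum>i\<in>out_nbrs D v. \<phi> i) - d v else 0))"
      by (rule sum.cong[OF refl], rule eqw)
    then show ?thesis by (simp add: sum.distrib)
  qed
  finally show ?thesis unfolding \<phi>_def[symmetric] d_def[symmetric] by (simp add: algebra_simps)
qed

lemma pagerank_formula:
  fixes D :: "('a::finite \<times> 'a) set"
  assumes "sym D" "0 < a" "a < 1" and ne: "\<And>w. out_nbrs D w \<noteq> {}"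
  shows "pagerank a q D v = real (card (out_nbrs D v)) * (\<Sum>u\<in>UNIV. q u * potential a D u v)
          / (\<Sum>i\<in>UNIV. real (card (out_nbrs D i)) * potential a D i v)"
proof -
  define dv where "dv = real (card (out_nbrs D v))"
  define s where "s = (\<Sum>i\<in>out_nbrs D v. potential a D i v)"
  define S where "S = (\<Sum>i\<in>UNIV. real (card (out_nbrs D i)) * potential a D i v)"
  define N where "N = (\<Sum>u\<in>UNIV. q u * potential a D u v)"
  have dvp: "dv > 0" unfolding dv_def using ne[of v] by (simp add: card_gt_0_iff)
  have k: "dv - (1 - a) * s = a * S" unfolding dv_def s_def S_def by (rule kac[OF assms])
  have "1 - (1 - a) / dv * s = (dv - (1 - a) * s) / dv" using dvp by (simp add: field_simps)
  also have "\<dots> = a * S / dv" using k by simp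
  finally have den: "1 - (1 - a) / dv * s = a * S / dv" .
  have "pagerank a q D v = a * N / (1 - (1 - a) / dv * s)"
    unfolding pagerank_def N_def dv_def s_def ..
  also have "\<dots> = a * N / (a * S / dv)" using den by simp
  also have "\<dots> = dv * N / S" using assms(2) by (simp add: field_simps)
  finally show ?thesis unfolding dv_def N_def S_def .
qed

lemma max_principle:
  fixes D :: "('a::finite \<times> 'a) set" and g :: "'a \<Rightarrow> real"
  assumes conn: "\<And>x y. (x, y) \<in> D\<^sup>*" and ne: "\<And>w. out_nbrs D w \<noteq> {}"
    and gv: "g v = 1" and gle: "\<And>w. g w \<le> 1"
    and geq: "\<And>w. w \<noteq> v \<Longrightarrow> g w = (\<Sum>i\<in>out_nbrs D w. g i) / real (card (out_nbrs D w))"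
  shows "g u = 1"
proof -
  define m where "m = Min (range g)"
  have mle: "m \<le> g w" for w unfolding m_def by (intro Min_le) auto
  have "m \<in> range g" unfolding m_def by (intro Min_in) auto
  then obtain w0 where w0: "g w0 = m" by auto
  have "m \<ge> 1"
  proof (rule ccontr)
    assume "\<not> m \<ge> 1"
    then have ml: "m < 1" by simp
    have step: "g x = m" if "g w = m" "(w, x) \<in> D" for w x
    proof -
      have wv: "w \<noteq> v" using that ml gv by auto
      let ?S = "out_nbrs D w"
      have cp: "real (card ?S) > 0" using ne[of w] by (simp add: card_gt_0_iff)
      have "(\<Sum>i\<in>?S. g i) = real (card ?S) * m" using geq[OF wv] that(1) cp by (simp add: field_simps)
      then have z: "(\<Sum>i\<in>?S. g i - m) = 0" by (simp add: sum_subtractf)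
      have nn: "\<And>i. i \<in> ?S \<Longrightarrow> 0 \<le> g i - m" using mle by auto
      have "\<forall>i\<in>?S. g i - m = 0" using sum_nonneg_eq_0_iff[where A="?S" and f="\<lambda>i. g i - m", OF out_fin nn] z by blast
      moreover have "x \<in> ?S" using that(2) unfolding out_nbrs_def by simp
      ultimately show ?thesis by simp
    qed
    have "(w0, v) \<in> D\<^sup>*" by (rule conn)
    then have "g v = m"
      by (induction rule: rtrancl_induct) (use w0 step in auto)
    then show False using gv ml by simp
  qed
  then show ?thesis using mle[of u] gle[of u] by simp
qed

definition aseq :: "nat \<Rightarrow> real" where "aseq k = 1 / (real k + 2)"

lemma aseq_bounds: "0 < aseq k" "aseq k < 1" unfolding aseq_def by (auto simp: field_simps)

lemma aseq_lim: "aseq \<longlonglongrightarrow> 0"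
proof -
  have "(\<lambda>k. 1 / (real (k + 2))) \<longlonglongrightarrow> 0"
    using LIMSEQ_ignore_initial_segment[OF lim_const_over_n[of 1], of 2] by simp
  then show ?thesis unfolding aseq_def by (simp add: add.commute)
qed

lemma aseq_dec: "m \<le> k \<Longrightarrow> aseq k \<le> aseq m" unfolding aseq_def by (simp add: frac_le)

lemma pot_to_1:
  fixes D :: "('a::finite \<times> 'a) set"
  assumes conn: "\<And>x y. (x, y) \<in> D\<^sup>*" and ne: "\<And>w. out_nbrs D w \<noteq> {}"
  shows "(\<lambda>k. potential (aseq k) D u v) \<longlonglongrightarrow> 1"
proof -
  have ab: "0 \<le> aseq k" "aseq k \<le> 1" for k using aseq_bounds[of k] by auto
  have conv: "(\<lambda>k. potential (aseq k) D w v) \<longlonglongrightarrow> lim (\<lambda>k. potential (aseq k) D w v)" for w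
  proof -
    have inc: "incseq (\<lambda>k. potential (aseq k) D w v)"
      by (rule incseq_SucI, rule pot_anti) (use ab aseq_dec in auto)
    have bdd: "bdd_above (range (\<lambda>k. potential (aseq k) D w v))"
      using pot_bounds ab by (intro bdd_aboveI[of _ 1]) blast
    have "convergent (\<lambda>k. potential (aseq k) D w v)"
      using LIMSEQ_incseq_SUP[OF bdd inc] by (auto simp: convergent_def)
    then show ?thesis by (simp add: convergent_LIMSEQ_iff)
  qed
  define g where "g w = lim (\<lambda>k. potential (aseq k) D w v)" for w
  have conv': "(\<lambda>k. potential (aseq k) D w v) \<longlonglongrightarrow> g w" for w using conv unfolding g_def .
  have gv: "g v = 1"
  proof -
    have "(\<lambda>k. potential (aseq k) D v v) = (\<lambda>k. 1)" by (rule ext) (simp add: pot_eq[OF ab(1) ab(2)])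
    then show ?thesis using conv'[of v] LIMSEQ_unique[OF _ tendsto_const] by metis
  qed
  have gle: "g w \<le> 1" for w
    using conv'[of w] pot_bounds ab by (intro LIMSEQ_le_const2) blast+
  have geq: "g w = (\<Sum>i\<in>out_nbrs D w. g i) / real (card (out_nbrs D w))" if wv: "w \<noteq> v" for w
  proof -
    have e: "potential (aseq k) D w v = (1 - aseq k) / real (card (out_nbrs D w)) * (\<Sum>i\<in>out_nbrs D w. potential (aseq k) D i v)" for k
      using pot_eq[of "aseq k" D w v] ab wv ne[of w] by simp
    have "(\<lambda>k. (1 - aseq k) / real (card (out_nbrs D w)) * (\<Sum>i\<in>out_nbrs D w. potential (aseq k) D i v))
        \<longlonglongrightarrow> (1 - 0) / real (card (out_nbrs D w)) * (\<Sum>i\<in>out_nbrs D w. g i)"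
      by (intro tendsto_intros aseq_lim conv') (use ne[of w] in simp)
    then have "(\<lambda>k. potential (aseq k) D w v) \<longlonglongrightarrow> (\<Sum>i\<in>out_nbrs D w. g i) / real (card (out_nbrs D w))"
      unfolding e using ne[of w] by simp
    then show ?thesis using LIMSEQ_unique conv' by blast
  qed
  have "g u = 1" by (rule max_principle[OF conn ne gv gle geq])
  then show ?thesis using conv'[of u] by simp
qed

lemma pagerank_lim:
  fixes D :: "('a::finite \<times> 'a) set"
  assumes "sym D" and conn: "\<And>x y. (x, y) \<in> D\<^sup>*" and ne: "\<And>w. out_nbrs D w \<noteq> {}"
    and qs: "(\<Sum>v\<in>UNIV. q v) = 1"
  shows "(\<lambda>k. pagerank (aseq k) q D v) \<longlonglongrightarrow>
      real (card (out_nbrs D v)) / (\<Sum>i\<in>UNIV. real (card (out_nbrs D i)))"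
proof -
  have e: "pagerank (aseq k) q D v = real (card (out_nbrs D v)) * (\<Sum>u\<in>UNIV. q u * potential (aseq k) D u v)
          / (\<Sum>i\<in>UNIV. real (card (out_nbrs D i)) * potential (aseq k) D i v)" for k
    using pagerank_formula[OF assms(1) aseq_bounds ne] .
  have T: "(\<Sum>i\<in>UNIV. real (card (out_nbrs D i))) \<noteq> 0"
  proof -
    have "(\<Sum>i\<in>UNIV. real (card (out_nbrs D i))) > 0"
      using ne by (intro sum_pos) (auto simp: card_gt_0_iff)
    then show ?thesis by simp
  qed
  have "(\<lambda>k. real (card (out_nbrs D v)) * (\<Sum>u\<in>UNIV. q u * potential (aseq k) D u v)
          / (\<Sum>i\<in>UNIV. real (card (out_nbrs D i)) * potential (aseq k) D i v))
     \<longlonglongrightarrow> real (card (out_nbrs D v)) * (\<Sum>u\<in>UNIV. q u * 1) / (\<Sum>i\<in>UNIV. real (card (out_nbrs D i)) * 1)"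
    using T by (intro tendsto_intros pot_to_1[OF conn ne]) simp
  then show ?thesis unfolding e using qs by simp
qed




lemma complete_dir:
  fixes E :: "('a::finite \<times> 'a) set" and q :: "'a \<Rightarrow> real"
  assumes irr: "\<And>x. (x, x) \<notin> E" and comp: "\<And>x y. x \<noteq> y \<Longrightarrow> (x, y) \<in> E"
    and qn: "\<And>v. q v \<ge> 0" and qs: "(\<Sum>v\<in>UNIV. q v) = 1"
    and a0: "0 < a" and a1: "a < 1"
  shows "best_response a q E v"
  unfolding best_response_def
proof (intro allI impI notI)
  fix Ev uo
  assume st: "is_strategy E v Ev uo \<and> admissible a q E v Ev uo"
    and gt: "pagerank a q (deviate E v Ev uo) v > pagerank a q E v"
  have outE: "out_nbrs E w = UNIV - {w}" for w
    using irr comp unfolding out_nbrs_def by auto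
  have uo: "uo = None"
    using st unfolding is_strategy_def outE by (cases uo) auto
  define D where "D = deviate E v Ev None"
  have EvS: "Ev \<subseteq> UNIV - {v}" using st unfolding is_strategy_def outE by simp
  have outDv: "out_nbrs D v = Ev"
    using EvS irr comp unfolding D_def deviate_def out_nbrs_def by (auto simp: subset_iff)
  have Evne: "Ev \<noteq> {}" using st uo outDv unfolding is_strategy_def D_def by simp
  have outDw: "out_nbrs D w = (if w \<in> Ev then UNIV - {w} else UNIV - {w, v})" if "w \<noteq> v" for w
    using that EvS irr comp unfolding D_def deviate_def out_nbrs_def by (auto simp: subset_iff)
  obtain w0 where w0: "w0 \<in> Ev" using Evne by auto
  have w0v: "w0 \<noteq> v" using w0 EvS by auto
  define n where "n = real (card (UNIV::'a set))"
  have n2: "n \<ge> 2"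
  proof -
    have "card {v, w0} \<le> card (UNIV::'a set)" by (rule card_mono) auto
    then show ?thesis using w0v unfolding n_def by simp
  qed
  define c where "c = (1 - a) / (1 + (n - 2) * a)"
  have dpos: "1 + (n - 2) * a > 0" using n2 a0 by (simp add: add_pos_nonneg)
  have c0: "0 \<le> c" unfolding c_def using a1 dpos by simp
  have c1: "c \<le> 1 - a"
  proof -
    have "(1 - a) / (1 + (n - 2) * a) \<le> (1 - a) / 1"
      using a1 dpos n2 a0 by (intro divide_left_mono) auto
    then show ?thesis unfolding c_def by simp
  qed
  have ceq: "(1 - a) / (n - 1) * (1 + (n - 2) * c) = c"
  proof -
    have cd: "c * (1 + (n - 2) * a) = 1 - a" using dpos unfolding c_def by simp
    have "(1 - a) * (1 + (n - 2) * c) - c * (n - 1) = (1 - a) - c * (1 + (n - 2) * a)"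
      by (simp add: algebra_simps)
    then have "(1 - a) * (1 + (n - 2) * c) = c * (n - 1)" using cd by simp
    then show ?thesis using n2 by (simp add: field_simps)
  qed
  define f where "f w = (if w = v then 1 else c)" for w
  have cu: "1 \<le> card (UNIV::'a set)" using card_gt_0_iff[of "UNIV::'a set"] by simp
  have cardm: "real (card (UNIV - {w::'a})) = n - 1" for w
    unfolding n_def using cu by (simp add: card_Diff_singleton of_nat_diff)
  have sumf: "(\<Sum>i\<in>UNIV - {w}. f i) = 1 + (n - 2) * c" if "w \<noteq> v" for w
  proof -
    have vin: "v \<in> UNIV - {w}" using that by simp
    have "(\<Sum>i\<in>UNIV - {w}. f i) = f v + (\<Sum>i\<in>UNIV - {w} - {v}. f i)"
      by (rule sum.remove[OF _ vin]) simp
    also have "(\<Sum>i\<in>UNIV - {w} - {v}. f i) = (\<Sum>i\<in>UNIV - {w} - {v}. c)"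
      unfolding f_def by (intro sum.cong) auto
    also have "\<dots> = (n - 2) * c"
    proof -
      have "card (UNIV - {w} - {v}) = card (UNIV::'a set) - 2"
        using that by (simp add: card_Diff_singleton)
      moreover have "card (UNIV::'a set) \<ge> 2" using n2 unfolding n_def by simp
      ultimately show ?thesis unfolding n_def by (simp add: of_nat_diff)
    qed
    finally show ?thesis unfolding f_def by simp
  qed
  have sumq: "(\<Sum>w\<in>UNIV. q w * f w) = c + (1 - c) * q v"
  proof -
    have "(\<Sum>w\<in>UNIV. q w * f w) = (\<Sum>w\<in>UNIV. c * q w + (if w = v then (1 - c) * q v else 0))"
      unfolding f_def by (intro sum.cong) (auto simp: algebra_simps)
    also have "\<dots> = c * (\<Sum>w\<in>UNIV. q w) + (1 - c) * q v"
      by (simp add: sum.distrib sum_distrib_left)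
    finally show ?thesis using qs by simp
  qed
  have potE: "potential a E w v = f w" for w
  proof (rule pot_unique)
    show "0 \<le> a" "a \<le> 1" "0 < a" using a0 a1 by auto
    show "f v = 1" unfolding f_def by simp
    show "0 \<le> f u \<and> f u \<le> 1" for u unfolding f_def using c0 c1 a0 by auto
    show "f u = (if out_nbrs E u = {} then 0 else (1 - a) / real (card (out_nbrs E u)) * sum f (out_nbrs E u))"
      if "u \<noteq> v" for u
    proof -
      have "out_nbrs E u \<noteq> {}" using that unfolding outE by auto
      then show ?thesis using that sumf[OF that] cardm[of u] ceq unfolding outE f_def by simp
    qed
  qed
  have hD: "hit_prob a D v k w \<le> f w" for k w
  proof (induction k arbitrary: w)
    case 0 then show ?case using c0 unfolding f_def by simp
  next
    case (Suc k)
    show ?case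
    proof (cases "w = v \<or> out_nbrs D w = {}")
      case True then show ?thesis using c0 unfolding f_def by auto
    next
      case False
      let ?S = "out_nbrs D w"
      have wv: "w \<noteq> v" using False by simp
      have sle: "(\<Sum>i\<in>?S. hit_prob a D v k i) \<le> (\<Sum>i\<in>?S. f i)"
        using Suc by (intro sum_mono) auto
      have "(1 - a) / real (card ?S) * (\<Sum>i\<in>?S. hit_prob a D v k i) \<le> (1 - a) / real (card ?S) * (\<Sum>i\<in>?S. f i)"
        using sle a1 by (intro mult_left_mono) auto
      also have "\<dots> \<le> c"
      proof (cases "w \<in> Ev")
        case True
        then show ?thesis using outDw[OF wv] sumf[OF wv] cardm[of w] ceq by simp
      next
        case False
        have S: "?S = UNIV - {w, v}" using outDw[OF wv] False by simp
        have "(\<Sum>i\<in>?S. f i) = real (card ?S) * c" unfolding S f_def by simp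
        moreover have "?S \<noteq> {}" using \<open>\<not> (w = v \<or> ?S = {})\<close> by simp
        ultimately have "(1 - a) / real (card ?S) * (\<Sum>i\<in>?S. f i) = (1 - a) * c"
          using dmc2[of "real (card ?S)" "1-a" c] by simp
        also have "\<dots> \<le> c" using c0 a0 by (simp add: algebra_simps)
        finally show ?thesis .
      qed
      finally show ?thesis using False unfolding f_def by simp
    qed
  qed
  have potD: "potential a D w v \<le> f w" for w
    using pot_tendsto[of a D v w] a0 a1 hD by (intro LIMSEQ_le_const2) auto
  define A where "A = c + (1 - c) * q v"
  have A0: "A \<ge> 0" unfolding A_def using c0 c1 a0 qn[of v] by simp
  have denE: "1 - (1 - a) / real (card (out_nbrs E v)) * (\<Sum>i\<in>out_nbrs E v. potential a E i v) = 1 - (1 - a) * c"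
  proof -
    have "(\<Sum>i\<in>out_nbrs E v. potential a E i v) = (\<Sum>i\<in>UNIV - {v}. c)"
      unfolding outE potE f_def by (intro sum.cong) auto
    also have "\<dots> = (n - 1) * c" using cardm[of v] by simp
    finally show ?thesis unfolding outE using cardm[of v] n2 by simp
  qed
  have piE: "pagerank a q E v = a * A / (1 - (1 - a) * c)"
    unfolding pagerank_def denE unfolding potE sumq A_def ..
  have dpos2: "1 - (1 - a) * c > 0"
  proof -
    have "(1 - a) * c \<le> c" using c0 a0 by (simp add: algebra_simps)
    then show ?thesis using c1 a0 by linarith
  qed
  have numD: "(\<Sum>w\<in>UNIV. q w * potential a D w v) \<le> A"
  proof -
    have "(\<Sum>w\<in>UNIV. q w * potential a D w v) \<le> (\<Sum>w\<in>UNIV. q w * f w)"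
      using qn potD by (intro sum_mono mult_left_mono) auto
    then show ?thesis using sumq unfolding A_def by simp
  qed
  have denD: "1 - (1 - a) / real (card (out_nbrs D v)) * (\<Sum>i\<in>out_nbrs D v. potential a D i v) \<ge> 1 - (1 - a) * c"
  proof -
    have "(\<Sum>i\<in>Ev. potential a D i v) \<le> (\<Sum>i\<in>Ev. c)"
    proof (rule sum_mono)
      fix i assume "i \<in> Ev"
      then have "i \<noteq> v" using EvS by auto
      then show "potential a D i v \<le> c" using potD[of i] unfolding f_def by simp
    qed
    also have "\<dots> = real (card Ev) * c" by simp
    finally have s: "(\<Sum>i\<in>Ev. potential a D i v) \<le> real (card Ev) * c" .
    have cp: "real (card Ev) > 0" using Evne by (simp add: card_gt_0_iff)
    have "(1 - a) / real (card Ev) * (\<Sum>i\<in>Ev. potential a D i v) \<le> (1 - a) / real (card Ev) * (real (card Ev) * c)"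
      using s a1 by (intro mult_left_mono) auto
    also have "\<dots> = (1 - a) * c" using Evne dmc2[of "real (card Ev)" "1-a" c] by simp
    finally show ?thesis unfolding outDv by simp
  qed
  have "pagerank a q D v \<le> pagerank a q E v"
  proof -
    let ?N = "\<Sum>w\<in>UNIV. q w * potential a D w v"
    let ?d = "1 - (1 - a) / real (card (out_nbrs D v)) * (\<Sum>i\<in>out_nbrs D v. potential a D i v)"
    have dp: "?d > 0" using denD dpos2 by linarith
    have "pagerank a q D v = a * ?N / ?d" unfolding pagerank_def ..
    also have "\<dots> \<le> a * A / ?d" using numD dp a0 by (intro divide_right_mono mult_left_mono) auto
    also have "\<dots> \<le> a * A / (1 - (1 - a) * c)" using A0 a0 dpos2 denD by (intro divide_left_mono) auto
    finally show ?thesis using piE by simp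
  qed
  then show False using gt uo unfolding D_def by simp
qed



lemma frac_gap:
  fixes d T :: real
  assumes "T > 0" "2 * d < T"
  shows "d / T < (d + 1) / (T + 2)"
proof -
  have "d * (T + 2) < (d + 1) * T" using assms by (simp add: algebra_simps)
  then show ?thesis using assms by (simp add: field_simps)
qed

lemma deg_gap:
  fixes E :: "('a::finite \<times> 'a) set"
  assumes irr: "\<And>z. (z, z) \<notin> E" and ne: "\<And>w. out_nbrs E w \<noteq> {}"
    and xy: "x \<noteq> y" "y \<notin> out_nbrs E x"
  shows "2 * real (card (out_nbrs E x)) < (\<Sum>w\<in>UNIV. real (card (out_nbrs E w)))"
proof -
  let ?d = "\<lambda>w. real (card (out_nbrs E w))"
  let ?S = "insert y (out_nbrs E x)"
  have xS: "x \<notin> ?S" using xy irr unfolding out_nbrs_def by auto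
  have d1: "?d w \<ge> 1" for w using ne[of w] by (simp add: Suc_leI card_gt_0_iff)
  have "(\<Sum>w\<in>insert x ?S. ?d w) \<le> (\<Sum>w\<in>UNIV. ?d w)"
    by (rule sum_mono2) auto
  moreover have "(\<Sum>w\<in>insert x ?S. ?d w) = ?d x + (\<Sum>w\<in>?S. ?d w)"
    using xS by simp
  moreover have "(\<Sum>w\<in>?S. ?d w) \<ge> (\<Sum>w\<in>?S. 1)"
    using d1 by (intro sum_mono) auto
  moreover have "(\<Sum>w\<in>?S. (1::real)) = ?d x + 1"
    using xy by (simp add: card_insert_disjoint)
  ultimately show ?thesis by linarith
qed

lemma noncomplete_dir:
  fixes E :: "('a::finite \<times> 'a) set" and q :: "'a \<Rightarrow> real"
  assumes sy: "sym E" and irr: "\<And>x. (x, x) \<notin> E" and conn: "\<And>x y. (x, y) \<in> E\<^sup>*"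
    and qs: "(\<Sum>v\<in>UNIV. q v) = 1"
    and uv: "u \<noteq> v" and nuv: "(u, v) \<notin> E"
  shows "\<exists>a. 0 < a \<and> a < 1 \<and> \<not> best_response a q E v"
proof -
  have nvu: "(v, u) \<notin> E" using nuv sy by (auto dest: symD)
  have ne: "out_nbrs E w \<noteq> {}" for w
  proof -
    have "\<exists>x. x \<noteq> w" using uv by metis
    then obtain x where x: "x \<noteq> w" by blast
    have "(w, x) \<in> E\<^sup>*" by (rule conn)
    then obtain y where "(w, y) \<in> E" using x by (cases rule: converse_rtranclE) auto
    then show ?thesis unfolding out_nbrs_def by auto
  qed
  define E' where "E' = E \<union> {(u, v), (v, u)}"
  have dev: "deviate E v (out_nbrs E v) (Some u) = E'"
    unfolding deviate_def E'_def by auto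
  have sy': "sym E'" using sy unfolding E'_def sym_def by auto
  have conn': "(x, y) \<in> E'\<^sup>*" for x y
    using conn[of x y] rtrancl_mono[of E E'] unfolding E'_def by auto
  have ne': "out_nbrs E' w \<noteq> {}" for w using ne[of w] unfolding E'_def out_nbrs_def by auto
  have outE': "out_nbrs E' w = (if w = u then insert v (out_nbrs E w) else if w = v then insert u (out_nbrs E w) else out_nbrs E w)" for w
    using uv unfolding E'_def out_nbrs_def by auto
  have vnu: "v \<notin> out_nbrs E u" and unv: "u \<notin> out_nbrs E v"
    using nuv nvu unfolding out_nbrs_def by auto
  define d where "d w = real (card (out_nbrs E w))" for w
  define T where "T = (\<Sum>w\<in>UNIV. d w)"
  have d': "real (card (out_nbrs E' w)) = d w + (if w = u then 1 else 0) + (if w = v then 1 else 0)" for w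
    unfolding outE' d_def using uv vnu unv by (auto simp: card_insert_disjoint)
  have T': "(\<Sum>w\<in>UNIV. real (card (out_nbrs E' w))) = T + 2"
    unfolding d' T_def using uv by (simp add: sum.distrib)
  have Tpos: "T > 0" unfolding T_def d_def using ne by (intro sum_pos) (auto simp: card_gt_0_iff)
  have gv: "2 * d v < T" unfolding d_def T_def by (rule deg_gap[OF irr ne uv[symmetric] unv])
  have gu: "2 * d u < T" unfolding d_def T_def by (rule deg_gap[OF irr ne uv vnu])
  have lv: "(\<lambda>k. pagerank (aseq k) q E' v - pagerank (aseq k) q E v) \<longlonglongrightarrow> (d v + 1) / (T + 2) - d v / T"
  proof (intro tendsto_diff)
    show "(\<lambda>k. pagerank (aseq k) q E' v) \<longlonglongrightarrow> (d v + 1) / (T + 2)"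
      using pagerank_lim[OF sy' conn' ne' qs, of v] unfolding T' using uv d'[of v] by simp
    show "(\<lambda>k. pagerank (aseq k) q E v) \<longlonglongrightarrow> d v / T"
      using pagerank_lim[OF sy conn ne qs, of v] unfolding T_def d_def .
  qed
  have lu: "(\<lambda>k. pagerank (aseq k) q E' u - pagerank (aseq k) q E u) \<longlonglongrightarrow> (d u + 1) / (T + 2) - d u / T"
  proof (intro tendsto_diff)
    show "(\<lambda>k. pagerank (aseq k) q E' u) \<longlonglongrightarrow> (d u + 1) / (T + 2)"
      using pagerank_lim[OF sy' conn' ne' qs, of u] unfolding T' using uv d'[of u] by simp
    show "(\<lambda>k. pagerank (aseq k) q E u) \<longlonglongrightarrow> d u / T"
      using pagerank_lim[OF sy conn ne qs, of u] unfolding T_def d_def .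
  qed
  have pv: "0 < (d v + 1) / (T + 2) - d v / T" using frac_gap[OF Tpos gv] by simp
  have pu: "0 < (d u + 1) / (T + 2) - d u / T" using frac_gap[OF Tpos gu] by simp
  have "eventually (\<lambda>k. 0 < pagerank (aseq k) q E' v - pagerank (aseq k) q E v
      \<and> 0 < pagerank (aseq k) q E' u - pagerank (aseq k) q E u) sequentially"
    using order_tendstoD(1)[OF lv pv] order_tendstoD(1)[OF lu pu] by (rule eventually_conj)
  then obtain k where k: "pagerank (aseq k) q E' v > pagerank (aseq k) q E v"
      "pagerank (aseq k) q E' u > pagerank (aseq k) q E u"
    unfolding eventually_sequentially by auto
  have "\<not> best_response (aseq k) q E v"
    unfolding best_response_def
  proof
    assume H: "\<forall>Ev uo. is_strategy E v Ev uo \<and> admissible (aseq k) q E v Ev uo \<longrightarrow>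
        \<not> pagerank (aseq k) q (deviate E v Ev uo) v > pagerank (aseq k) q E v"
    have s: "is_strategy E v (out_nbrs E v) (Some u)"
      unfolding is_strategy_def dev using uv unv ne'[of v] by auto
    have ad: "admissible (aseq k) q E v (out_nbrs E v) (Some u)"
      unfolding admissible_def dev using k by simp
    have "\<not> pagerank (aseq k) q (deviate E v (out_nbrs E v) (Some u)) v > pagerank (aseq k) q E v"
      using H s ad by blast
    then show False using k unfolding dev by simp
  qed
  then show ?thesis using aseq_bounds[of k] by blast
qed

theorem theorem5p3:
  fixes E :: "('a::finite \<times> 'a) set" and q :: "'a \<Rightarrow> real"
  assumes "undirected_graph E"
    and "connected_graph E"
    and "\<forall>v. q v \<ge> 0"
    and "(\<Sum>v\<in>UNIV. q v) = 1"
  shows "alpha_insensitive_equilibrium q E \<longleftrightarrow> complete_graph E"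
proof -
  have sy: "sym E" and irr: "\<And>x. (x, x) \<notin> E"
    using assms(1) unfolding undirected_graph_def irrefl_def by auto
  have conn: "\<And>x y. (x, y) \<in> E\<^sup>*" using assms(2) unfolding connected_graph_def by auto
  show ?thesis
  proof
    assume ai: "alpha_insensitive_equilibrium q E"
    show "complete_graph E"
      unfolding complete_graph_def
    proof (intro allI impI)
      fix u v :: 'a assume uv: "u \<noteq> v"
      show "(u, v) \<in> E"
      proof (rule ccontr)
        assume "(u, v) \<notin> E"
        then obtain a where "0 < a" "a < 1" "\<not> best_response a q E v"
          using noncomplete_dir[OF sy irr conn assms(4) uv] by blast
        then show False using ai unfolding alpha_insensitive_equilibrium_def nash_equilibrium_def by blast
      qed
    qed
  next
    assume "complete_graph E"
    then have comp: "\<And>x y. x \<noteq> y \<Longrightarrow> (x, y) \<in> E" unfolding complete_graph_def by blast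
    show "alpha_insensitive_equilibrium q E"
      unfolding alpha_insensitive_equilibrium_def nash_equilibrium_def
      using complete_dir[OF irr comp] assms(3,4) by blast
  qed
qed

end
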